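(* Let $C$ be a Reedy category, let $\Gamma$ be one of $\int N(C)$, $\int N^{-,+}(C)$, $\int N^{--,+}_+(C)$, and let $(\alpha,\theta)\colon([m],X)\to([n],Y)$ be a morphism in $\Gamma$. Then the upward interval $\{(\beta,\varphi)\in\mathrm{Hom}_\Gamma(([m],X),([n],Y)):(\alpha,\theta)\le(\beta,\varphi)\}$, with the induced order, is a bounded distributive lattice.
   Context: A Reedy category $(C,C_-,C_+)$: wide subcategories with unique factorization of every morphism as ($C_-$ then $C_+$), membership in $C_\pm$ decidable, and the relation ($x<'y$ iff non-identity $x\to y$ in $C_+$ or non-identity $y\to x$ in $C_-$) well-founded. $\Delta$: finite ordinals $[n]$ and order-preserving maps. $\int N(C)$: objects $([n],X)$ with $X\colon[n]\to C$ a functor; morphisms $([m],X)\to([n],Y)$ are $(\alpha,\theta)$, $\alpha\colon[m]\to[n]$ in $\Delta$, $\theta\colon X\Rightarrow Y\circ\alpha$; composition $(\beta,\varphi)\circ(\alpha,\theta)=(\beta\alpha,(\varphi\alpha)\circ\theta)$. $\int N^{-,+}(C)$: subcategory of objects with $X$ sending all morphisms into $C_-$ and morphisms with all $\theta_i\in C_+$. $\int N^{--,+}_+(C)$: its subcategory of objects whose $X$ reflects identities and morphisms with $\alpha$ injective. Order on hom-sets: $(\alpha,\theta)\le(\alpha',\theta')$ iff $\alpha\le\alpha'$ pointwise and $\theta'_i=Y(\alpha(i)\le\alpha'(i))\circ\theta_i$ for all $i$. *)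

theory Defs
  imports Main
begin

record ('o, 'm) cat =
  Ob  :: "'o set"
  Ar  :: "'m set"
  Dom :: "'m \<Rightarrow> 'o"
  Cod :: "'m \<Rightarrow> 'o"
  Comp :: "'m \<Rightarrow> 'm \<Rightarrow> 'm"   (* Comp C g f = g \<circ> f *)
  Idm :: "'o \<Rightarrow> 'm"

definition hom :: "('o, 'm) cat \<Rightarrow> 'o \<Rightarrow> 'o \<Rightarrow> 'm set" where
  "hom C a b = {f \<in> Ar C. Dom C f = a \<and> Cod C f = b}"

definition category :: "('o, 'm) cat \<Rightarrow> bool" where
  "category C \<longleftrightarrow>
     (\<forall>f\<in>Ar C. Dom C f \<in> Ob C \<and> Cod C f \<in> Ob C) \<and>
     (\<forall>a\<in>Ob C. Idm C a \<in> hom C a a) \<and>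
     (\<forall>f\<in>Ar C. \<forall>g\<in>Ar C. Cod C f = Dom C g \<longrightarrow>
         Comp C g f \<in> hom C (Dom C f) (Cod C g)) \<and>
     (\<forall>f\<in>Ar C. Comp C (Idm C (Cod C f)) f = f \<and> Comp C f (Idm C (Dom C f)) = f) \<and>
     (\<forall>f\<in>Ar C. \<forall>g\<in>Ar C. \<forall>h\<in>Ar C. Cod C f = Dom C g \<longrightarrow> Cod C g = Dom C h \<longrightarrow>
         Comp C h (Comp C g f) = Comp C (Comp C h g) f)"

definition wide_subcat :: "('o, 'm) cat \<Rightarrow> 'm set \<Rightarrow> bool" where
  "wide_subcat C S \<longleftrightarrow> S \<subseteq> Ar C \<and> (\<forall>a\<in>Ob C. Idm C a \<in> S) \<and>
     (\<forall>f\<in>S. \<forall>g\<in>S. Cod C f = Dom C g \<longrightarrow> Comp C g f \<in> S)"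

definition reedy_rel :: "('o, 'm) cat \<Rightarrow> 'm set \<Rightarrow> 'm set \<Rightarrow> ('o \<times> 'o) set" where
  "reedy_rel C Cm Cp = {(x, y). x \<in> Ob C \<and> y \<in> Ob C \<and>
     ((\<exists>f \<in> hom C x y \<inter> Cp. f \<noteq> Idm C x) \<or> (\<exists>f \<in> hom C y x \<inter> Cm. f \<noteq> Idm C y))}"

definition reedy :: "('o, 'm) cat \<Rightarrow> 'm set \<Rightarrow> 'm set \<Rightarrow> bool" where
  "reedy C Cm Cp \<longleftrightarrow> category C \<and> wide_subcat C Cm \<and> wide_subcat C Cp \<and>
     (\<forall>f\<in>Ar C. \<exists>!(p, q). q \<in> Cm \<and> p \<in> Cp \<and> Cod C q = Dom C p \<and> Comp C p q = f) \<and>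
     wf (reedy_rel C Cm Cp)"

text \<open>An object ([n],X): n, the object part Xo and the arrow part Xa, where
  Xa i j is X(i \<le> j).\<close>
type_synonym ('o, 'm) nobj = "nat \<times> (nat \<Rightarrow> 'o) \<times> (nat \<Rightarrow> nat \<Rightarrow> 'm)"

text \<open>A morphism (\<alpha>, \<theta>); components are extensional (undefined beyond the source length).\<close>
type_synonym 'm nmor = "(nat \<Rightarrow> nat) \<times> (nat \<Rightarrow> 'm)"

definition nat_functor :: "('o, 'm) cat \<Rightarrow> ('o, 'm) nobj \<Rightarrow> bool" where
  "nat_functor C x = (case x of (n, Xo, Xa) \<Rightarrow>
     (\<forall>i\<le>n. Xo i \<in> Ob C) \<and>
     (\<forall>i j. i \<le> j \<and> j \<le> n \<longrightarrow> Xa i j \<in> hom C (Xo i) (Xo j)) \<and>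
     (\<forall>i\<le>n. Xa i i = Idm C (Xo i)) \<and>
     (\<forall>i j k. i \<le> j \<and> j \<le> k \<and> k \<le> n \<longrightarrow> Comp C (Xa j k) (Xa i j) = Xa i k))"

datatype variant = Full | MinusPlus | MinusMinusPlusPlus

text \<open>Objects of \<open>\<integral>N(C)\<close> (Full), \<open>\<integral>N^{-,+}(C)\<close> (MinusPlus), \<open>\<integral>N^{--,+}_+(C)\<close> (MinusMinusPlusPlus).\<close>
definition gobj :: "variant \<Rightarrow> ('o, 'm) cat \<Rightarrow> 'm set \<Rightarrow> 'm set \<Rightarrow> ('o, 'm) nobj \<Rightarrow> bool" where
  "gobj v C Cm Cp x = (case x of (n, Xo, Xa) \<Rightarrow>
     nat_functor C x \<and>
     (v \<noteq> Full \<longrightarrow> (\<forall>i j. i \<le> j \<and> j \<le> n \<longrightarrow> Xa i j \<in> Cm)) \<and>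
     (v = MinusMinusPlusPlus \<longrightarrow> (\<forall>i j. i \<le> j \<and> j \<le> n \<and> Xa i j = Idm C (Xo i) \<longrightarrow> i = j)))"

definition nmor_full :: "('o, 'm) cat \<Rightarrow> ('o, 'm) nobj \<Rightarrow> ('o, 'm) nobj \<Rightarrow> 'm nmor set" where
  "nmor_full C x y = (case x of (m, Xo, Xa) \<Rightarrow> case y of (n, Yo, Ya) \<Rightarrow>
     {(\<alpha>, \<theta>).
       (\<forall>i\<le>m. \<alpha> i \<le> n) \<and>
       (\<forall>i j. i \<le> j \<and> j \<le> m \<longrightarrow> \<alpha> i \<le> \<alpha> j) \<and>
       (\<forall>i\<le>m. \<theta> i \<in> hom C (Xo i) (Yo (\<alpha> i))) \<and>
       (\<forall>i j. i \<le> j \<and> j \<le> m \<longrightarrow> Comp C (\<theta> j) (Xa i j) = Comp C (Ya (\<alpha> i) (\<alpha> j)) (\<theta> i)) \<and>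
       (\<forall>i. m < i \<longrightarrow> \<alpha> i = undefined \<and> \<theta> i = undefined)})"

definition ghom :: "variant \<Rightarrow> ('o, 'm) cat \<Rightarrow> 'm set \<Rightarrow> 'm set \<Rightarrow>
    ('o, 'm) nobj \<Rightarrow> ('o, 'm) nobj \<Rightarrow> 'm nmor set" where
  "ghom v C Cm Cp x y = {(\<alpha>, \<theta>) \<in> nmor_full C x y.
     (v \<noteq> Full \<longrightarrow> (\<forall>i\<le>fst x. \<theta> i \<in> Cp)) \<and>
     (v = MinusMinusPlusPlus \<longrightarrow> inj_on \<alpha> {..fst x})}"

definition nmor_le :: "('o, 'm) cat \<Rightarrow> ('o, 'm) nobj \<Rightarrow> ('o, 'm) nobj \<Rightarrow> 'm nmor \<Rightarrow> 'm nmor \<Rightarrow> bool" where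
  "nmor_le C x y f g = (case f of (\<alpha>, \<theta>) \<Rightarrow> case g of (\<alpha>', \<theta>') \<Rightarrow>
     (\<forall>i\<le>fst x. \<alpha> i \<le> \<alpha>' i \<and> \<theta>' i = Comp C (snd (snd y) (\<alpha> i) (\<alpha>' i)) (\<theta> i)))"

definition is_lub :: "'a set \<Rightarrow> ('a \<Rightarrow> 'a \<Rightarrow> bool) \<Rightarrow> 'a \<Rightarrow> 'a \<Rightarrow> 'a \<Rightarrow> bool" where
  "is_lub S le a b s \<longleftrightarrow> s \<in> S \<and> le a s \<and> le b s \<and> (\<forall>u\<in>S. le a u \<and> le b u \<longrightarrow> le s u)"

definition is_glb :: "'a set \<Rightarrow> ('a \<Rightarrow> 'a \<Rightarrow> bool) \<Rightarrow> 'a \<Rightarrow> 'a \<Rightarrow> 'a \<Rightarrow> bool" where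
  "is_glb S le a b s \<longleftrightarrow> s \<in> S \<and> le s a \<and> le s b \<and> (\<forall>u\<in>S. le u a \<and> le u b \<longrightarrow> le u s)"

definition bounded_distrib_lattice_on :: "'a set \<Rightarrow> ('a \<Rightarrow> 'a \<Rightarrow> bool) \<Rightarrow> bool" where
  "bounded_distrib_lattice_on S le \<longleftrightarrow>
     (\<forall>a\<in>S. le a a) \<and>
     (\<forall>a\<in>S. \<forall>b\<in>S. le a b \<and> le b a \<longrightarrow> a = b) \<and>
     (\<forall>a\<in>S. \<forall>b\<in>S. \<forall>c\<in>S. le a b \<and> le b c \<longrightarrow> le a c) \<and>
     (\<exists>join meet.
        (\<forall>a\<in>S. \<forall>b\<in>S. is_lub S le a b (join a b) \<and> is_glb S le a b (meet a b)) \<and>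
        (\<forall>a\<in>S. \<forall>b\<in>S. \<forall>c\<in>S. meet a (join b c) = join (meet a b) (meet a c))) \<and>
     (\<exists>t\<in>S. \<forall>a\<in>S. le a t) \<and>
     (\<exists>z\<in>S. \<forall>a\<in>S. le z a)"

end

theory Submission
  imports Defs
begin

definition QQ :: "variant \<Rightarrow> ('o, 'm) cat \<Rightarrow> 'm set \<Rightarrow> nat \<Rightarrow> nat \<Rightarrow> (nat \<Rightarrow> nat) \<Rightarrow> (nat \<Rightarrow> 'm)
   \<Rightarrow> (nat \<Rightarrow> nat \<Rightarrow> 'm) \<Rightarrow> 'm nmor \<Rightarrow> bool" where
  "QQ v C Cp m n \<alpha> \<theta> Ya g \<longleftrightarrow> (case g of (\<beta>, \<phi>) \<Rightarrow>
     (\<forall>i\<le>m. \<alpha> i \<le> \<beta> i \<and> \<beta> i \<le> n) \<and> (\<forall>i j. i \<le> j \<and> j \<le> m \<longrightarrow> \<beta> i \<le> \<beta> j) \<and>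
     (\<forall>i\<le>m. \<phi> i = Comp C (Ya (\<alpha> i) (\<beta> i)) (\<theta> i)) \<and>
     (\<forall>i. m < i \<longrightarrow> \<beta> i = undefined \<and> \<phi> i = undefined) \<and>
     (v \<noteq> Full \<longrightarrow> (\<forall>i\<le>m. \<phi> i \<in> Cp)) \<and>
     (v = MinusMinusPlusPlus \<longrightarrow> inj_on \<beta> {..m}))"

lemma hom_iff: "f \<in> hom C a b \<longleftrightarrow> f \<in> Ar C \<and> Dom C f = a \<and> Cod C f = b"
  by (simp add: hom_def)

lemma cat_assoc:
  assumes "category C" "f \<in> Ar C" "g \<in> Ar C" "h \<in> Ar C" "Cod C f = Dom C g" "Cod C g = Dom C h"
  shows "Comp C h (Comp C g f) = Comp C (Comp C h g) f"
  using assms unfolding category_def by blast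

lemma cat_comp:
  assumes "category C" "f \<in> Ar C" "g \<in> Ar C" "Cod C f = Dom C g"
  shows "Comp C g f \<in> hom C (Dom C f) (Cod C g)"
  using assms unfolding category_def by blast

lemma cat_idl:
  assumes "category C" "f \<in> Ar C"
  shows "Comp C (Idm C (Cod C f)) f = f"
  using assms unfolding category_def by blast

lemma Ycomp:
  assumes cat: "category C" and Y: "nat_functor C (n,Yo,Ya)"
    and "a \<le> b" "b \<le> c" "c \<le> n" "t \<in> Ar C" "Cod C t = Yo a"
  shows "Comp C (Ya b c) (Comp C (Ya a b) t) = Comp C (Ya a c) t"
proof -
  have 1: "Ya a b \<in> hom C (Yo a) (Yo b)" "Ya b c \<in> hom C (Yo b) (Yo c)"
    and 2: "Comp C (Ya b c) (Ya a b) = Ya a c"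
    using Y assms(3-5) unfolding nat_functor_def by auto
  have "Comp C (Ya b c) (Comp C (Ya a b) t) = Comp C (Comp C (Ya b c) (Ya a b)) t"
    using cat_assoc[OF cat, of t "Ya a b" "Ya b c"] 1 assms(6,7) unfolding hom_iff by simp
  then show ?thesis using 2 by simp
qed

lemma Ycomp_hom:
  assumes cat: "category C" and Y: "nat_functor C (n,Yo,Ya)"
    and "a \<le> b" "b \<le> n" "t \<in> hom C z (Yo a)"
  shows "Comp C (Ya a b) t \<in> hom C z (Yo b)"
proof -
  have 1: "Ya a b \<in> hom C (Yo a) (Yo b)"
    using Y assms(3-4) unfolding nat_functor_def by auto
  then show ?thesis using cat_comp[OF cat, of t "Ya a b"] assms(5) unfolding hom_iff by simp
qed

lemma char:
  assumes cat: "category C" and Y: "nat_functor C (n,Yo,Ya)" and X: "nat_functor C (m,Xo,Xa)"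
    and f: "(\<alpha>,\<theta>) \<in> ghom v C Cm Cp (m,Xo,Xa) (n,Yo,Ya)"
  shows "(g \<in> ghom v C Cm Cp (m,Xo,Xa) (n,Yo,Ya) \<and> nmor_le C (m,Xo,Xa) (n,Yo,Ya) (\<alpha>,\<theta>) g)
     \<longleftrightarrow> QQ v C Cp m n \<alpha> \<theta> Ya g"
proof (cases g)
  case (Pair \<beta> \<phi>)
  have fa: "\<forall>i\<le>m. \<alpha> i \<le> n" "\<forall>i j. i \<le> j \<and> j \<le> m \<longrightarrow> \<alpha> i \<le> \<alpha> j"
     "\<forall>i\<le>m. \<theta> i \<in> hom C (Xo i) (Yo (\<alpha> i))"
     "\<forall>i j. i \<le> j \<and> j \<le> m \<longrightarrow> Comp C (\<theta> j) (Xa i j) = Comp C (Ya (\<alpha> i) (\<alpha> j)) (\<theta> i)"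
    using f unfolding ghom_def nmor_full_def by auto
  show ?thesis
  proof
    assume "g \<in> ghom v C Cm Cp (m,Xo,Xa) (n,Yo,Ya) \<and> nmor_le C (m,Xo,Xa) (n,Yo,Ya) (\<alpha>,\<theta>) g"
    then show "QQ v C Cp m n \<alpha> \<theta> Ya g"
      unfolding Pair QQ_def ghom_def nmor_full_def nmor_le_def by auto
  next
    assume q: "QQ v C Cp m n \<alpha> \<theta> Ya g"
    have b: "\<forall>i\<le>m. \<alpha> i \<le> \<beta> i \<and> \<beta> i \<le> n" "\<forall>i j. i \<le> j \<and> j \<le> m \<longrightarrow> \<beta> i \<le> \<beta> j"
      "\<forall>i\<le>m. \<phi> i = Comp C (Ya (\<alpha> i) (\<beta> i)) (\<theta> i)"
      "\<forall>i. m < i \<longrightarrow> \<beta> i = undefined \<and> \<phi> i = undefined"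
      "v \<noteq> Full \<longrightarrow> (\<forall>i\<le>m. \<phi> i \<in> Cp)" "v = MinusMinusPlusPlus \<longrightarrow> inj_on \<beta> {..m}"
      using q unfolding QQ_def Pair by auto
    have h: "\<phi> i \<in> hom C (Xo i) (Yo (\<beta> i))" if "i \<le> m" for i
      using Ycomp_hom[OF cat Y, of "\<alpha> i" "\<beta> i" "\<theta> i" "Xo i"] b fa that by auto
    have nat: "Comp C (\<phi> j) (Xa i j) = Comp C (Ya (\<beta> i) (\<beta> j)) (\<phi> i)" if "i \<le> j" "j \<le> m" for i j
    proof -
      have ti: "\<theta> i \<in> Ar C" "Cod C (\<theta> i) = Yo (\<alpha> i)" and tj: "\<theta> j \<in> Ar C"
        using fa(3) that unfolding hom_iff by auto
      have xa: "Xa i j \<in> Ar C" "Cod C (Xa i j) = Dom C (\<theta> j)"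
        using X fa(3) that unfolding nat_functor_def hom_iff by auto
      have yab: "Ya (\<alpha> j) (\<beta> j) \<in> Ar C" "Dom C (Ya (\<alpha> j) (\<beta> j)) = Cod C (\<theta> j)"
        using Y fa(3) b(1) that unfolding nat_functor_def hom_iff by auto
      have "Comp C (\<phi> j) (Xa i j) = Comp C (Ya (\<alpha> j) (\<beta> j)) (Comp C (\<theta> j) (Xa i j))"
        using b(3) that cat_assoc[OF cat xa(1) tj yab(1) xa(2) yab(2)[symmetric]] by simp
      also have "\<dots> = Comp C (Ya (\<alpha> j) (\<beta> j)) (Comp C (Ya (\<alpha> i) (\<alpha> j)) (\<theta> i))"
        using fa(4) that by simp
      also have "\<dots> = Comp C (Ya (\<alpha> i) (\<beta> j)) (\<theta> i)"
        using Ycomp[OF cat Y] fa b that ti by (meson le_trans)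
      also have "\<dots> = Comp C (Ya (\<beta> i) (\<beta> j)) (\<phi> i)"
        using Ycomp[OF cat Y, of "\<alpha> i" "\<beta> i" "\<beta> j" "\<theta> i"] b that ti by (metis le_trans)
      finally show ?thesis .
    qed
    show "g \<in> ghom v C Cm Cp (m,Xo,Xa) (n,Yo,Ya) \<and> nmor_le C (m,Xo,Xa) (n,Yo,Ya) (\<alpha>,\<theta>) g"
      unfolding Pair ghom_def nmor_full_def nmor_le_def using b h nat by auto
  qed
qed


lemma inj_mono_iff:
  assumes "\<forall>i j. i \<le> j \<and> j \<le> m \<longrightarrow> (\<beta>::nat\<Rightarrow>nat) i \<le> \<beta> j"
  shows "inj_on \<beta> {..m} \<longleftrightarrow> (\<forall>i j. i < j \<and> j \<le> m \<longrightarrow> \<beta> i < \<beta> j)"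
proof
  assume "inj_on \<beta> {..m}"
  then show "\<forall>i j. i < j \<and> j \<le> m \<longrightarrow> \<beta> i < \<beta> j"
  proof (intro allI impI)
    fix i j assume inj: "inj_on \<beta> {..m}" and ij: "i < j \<and> j \<le> m"
    have "\<beta> i \<le> \<beta> j" using assms ij by simp
    moreover have "\<beta> i \<noteq> \<beta> j" using inj_onD[OF inj, of i j] ij by auto
    ultimately show "\<beta> i < \<beta> j" by simp
  qed
next
  assume a: "\<forall>i j. i < j \<and> j \<le> m \<longrightarrow> \<beta> i < \<beta> j"
  show "inj_on \<beta> {..m}"
    unfolding inj_on_def
  proof (intro ballI impI)
    fix i j assume "i \<in> {..m}" "j \<in> {..m}" "\<beta> i = \<beta> j"
    then show "i = j" using a[rule_format, of i j] a[rule_format, of j i]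
      by (cases i j rule: linorder_cases) auto
  qed
qed

definition jn :: "'m nmor \<Rightarrow> 'm nmor \<Rightarrow> 'm nmor" where
  "jn g h = (\<lambda>i. if fst g i \<le> fst h i then fst h i else fst g i,
             \<lambda>i. if fst g i \<le> fst h i then snd h i else snd g i)"

definition mt :: "'m nmor \<Rightarrow> 'm nmor \<Rightarrow> 'm nmor" where
  "mt g h = (\<lambda>i. if fst g i \<le> fst h i then fst g i else fst h i,
             \<lambda>i. if fst g i \<le> fst h i then snd g i else snd h i)"

lemma fst_jn: "fst (jn g h) i = max (fst g i) (fst h i)" by (simp add: jn_def)
lemma fst_mt: "fst (mt g h) i = min (fst g i) (fst h i)" by (simp add: mt_def)

lemma QQ_unf:
  assumes "QQ v C Cp m n \<alpha> \<theta> Ya g"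
  shows "\<forall>i\<le>m. \<alpha> i \<le> fst g i \<and> fst g i \<le> n"
    "\<forall>i j. i \<le> j \<and> j \<le> m \<longrightarrow> fst g i \<le> fst g j"
    "\<forall>i\<le>m. snd g i = Comp C (Ya (\<alpha> i) (fst g i)) (\<theta> i)"
    "\<forall>i. m < i \<longrightarrow> fst g i = undefined \<and> snd g i = undefined"
    "v \<noteq> Full \<longrightarrow> (\<forall>i\<le>m. snd g i \<in> Cp)"
    "v = MinusMinusPlusPlus \<longrightarrow> (\<forall>i j. i < j \<and> j \<le> m \<longrightarrow> fst g i < fst g j)"
proof -
  obtain b p where g: "g = (b,p)" by fastforce
  show "\<forall>i\<le>m. \<alpha> i \<le> fst g i \<and> fst g i \<le> n"
    "\<forall>i j. i \<le> j \<and> j \<le> m \<longrightarrow> fst g i \<le> fst g j"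
    "\<forall>i\<le>m. snd g i = Comp C (Ya (\<alpha> i) (fst g i)) (\<theta> i)"
    "\<forall>i. m < i \<longrightarrow> fst g i = undefined \<and> snd g i = undefined"
    "v \<noteq> Full \<longrightarrow> (\<forall>i\<le>m. snd g i \<in> Cp)"
    using assms unfolding g QQ_def prod.case fst_conv snd_conv by blast+
  have "v = MinusMinusPlusPlus \<longrightarrow> inj_on b {..m}" "\<forall>i j. i \<le> j \<and> j \<le> m \<longrightarrow> b i \<le> b j"
    using assms unfolding g QQ_def prod.case by blast+
  then show "v = MinusMinusPlusPlus \<longrightarrow> (\<forall>i j. i < j \<and> j \<le> m \<longrightarrow> fst g i < fst g j)"
    using inj_mono_iff[of m b] unfolding g by simp
qed

lemma QQ_pick:
  assumes g: "QQ v C Cp m n \<alpha> \<theta> Ya g" and h: "QQ v C Cp m n \<alpha> \<theta> Ya h"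
    and pick: "\<And>i. (fst k i = fst g i \<and> snd k i = snd g i) \<or> (fst k i = fst h i \<and> snd k i = snd h i)"
    and mono: "\<forall>i j. i \<le> j \<and> j \<le> m \<longrightarrow> fst k i \<le> fst k j"
    and strict: "v = MinusMinusPlusPlus \<longrightarrow> (\<forall>i j. i < j \<and> j \<le> m \<longrightarrow> fst k i < fst k j)"
  shows "QQ v C Cp m n \<alpha> \<theta> Ya k"
proof -
  obtain b p where k: "k = (b,p)" by fastforce
  note G = QQ_unf[OF g] and H = QQ_unf[OF h]
  have c1: "\<forall>i\<le>m. \<alpha> i \<le> b i \<and> b i \<le> n"
  proof (intro allI impI)
    fix i assume "i \<le> m" then show "\<alpha> i \<le> b i \<and> b i \<le> n"
      using pick[of i] G(1) H(1) unfolding k by auto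
  qed
  have c3: "\<forall>i\<le>m. p i = Comp C (Ya (\<alpha> i) (b i)) (\<theta> i)"
  proof (intro allI impI)
    fix i assume "i \<le> m" then show "p i = Comp C (Ya (\<alpha> i) (b i)) (\<theta> i)"
      using pick[of i] G(3) H(3) unfolding k by auto
  qed
  have c4: "\<forall>i. m < i \<longrightarrow> b i = undefined \<and> p i = undefined"
  proof (intro allI impI)
    fix i assume "m < i" then show "b i = undefined \<and> p i = undefined"
      using pick[of i] G(4) H(4) unfolding k by auto
  qed
  have c5: "v \<noteq> Full \<longrightarrow> (\<forall>i\<le>m. p i \<in> Cp)"
  proof (intro allI impI)
    fix i assume "v \<noteq> Full" "i \<le> m" then show "p i \<in> Cp"
      using pick[of i] G(5) H(5) unfolding k by auto
  qed
  have mono': "\<forall>i j. i \<le> j \<and> j \<le> m \<longrightarrow> b i \<le> b j" using mono unfolding k by simp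
  have c6: "v = MinusMinusPlusPlus \<longrightarrow> inj_on b {..m}"
    using strict inj_mono_iff[OF mono'] unfolding k by simp
  show ?thesis unfolding k QQ_def using c1 mono' c3 c4 c5 c6 by simp
qed

lemma QQ_jn:
  assumes "QQ v C Cp m n \<alpha> \<theta> Ya g" "QQ v C Cp m n \<alpha> \<theta> Ya h"
  shows "QQ v C Cp m n \<alpha> \<theta> Ya (jn g h)"
proof (rule QQ_pick[OF assms])
  note G = QQ_unf[OF assms(1)] and H = QQ_unf[OF assms(2)]
  show "(fst (jn g h) i = fst g i \<and> snd (jn g h) i = snd g i) \<or> (fst (jn g h) i = fst h i \<and> snd (jn g h) i = snd h i)" for i
    unfolding jn_def by simp
  show "\<forall>i j. i \<le> j \<and> j \<le> m \<longrightarrow> fst (jn g h) i \<le> fst (jn g h) j"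
  proof (intro allI impI)
    fix i j assume "i \<le> j \<and> j \<le> m"
    then have "fst g i \<le> fst g j" "fst h i \<le> fst h j" using G(2) H(2) by auto
    then show "fst (jn g h) i \<le> fst (jn g h) j" unfolding fst_jn max_def by auto
  qed
  show "v = MinusMinusPlusPlus \<longrightarrow> (\<forall>i j. i < j \<and> j \<le> m \<longrightarrow> fst (jn g h) i < fst (jn g h) j)"
  proof (intro allI impI)
    fix i j assume "v = MinusMinusPlusPlus" "i < j \<and> j \<le> m"
    then have "fst g i < fst g j" "fst h i < fst h j" using G(6) H(6) by auto
    then show "fst (jn g h) i < fst (jn g h) j" unfolding fst_jn max_def by auto
  qed
qed

lemma QQ_mt:
  assumes "QQ v C Cp m n \<alpha> \<theta> Ya g" "QQ v C Cp m n \<alpha> \<theta> Ya h"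
  shows "QQ v C Cp m n \<alpha> \<theta> Ya (mt g h)"
proof (rule QQ_pick[OF assms])
  note G = QQ_unf[OF assms(1)] and H = QQ_unf[OF assms(2)]
  show "(fst (mt g h) i = fst g i \<and> snd (mt g h) i = snd g i) \<or> (fst (mt g h) i = fst h i \<and> snd (mt g h) i = snd h i)" for i
    unfolding mt_def by simp
  show "\<forall>i j. i \<le> j \<and> j \<le> m \<longrightarrow> fst (mt g h) i \<le> fst (mt g h) j"
  proof (intro allI impI)
    fix i j assume "i \<le> j \<and> j \<le> m"
    then have "fst g i \<le> fst g j" "fst h i \<le> fst h j" using G(2) H(2) by auto
    then show "fst (mt g h) i \<le> fst (mt g h) j" unfolding fst_mt min_def by auto
  qed
  show "v = MinusMinusPlusPlus \<longrightarrow> (\<forall>i j. i < j \<and> j \<le> m \<longrightarrow> fst (mt g h) i < fst (mt g h) j)"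
  proof (intro allI impI)
    fix i j assume "v = MinusMinusPlusPlus" "i < j \<and> j \<le> m"
    then have "fst g i < fst g j" "fst h i < fst h j" using G(6) H(6) by auto
    then show "fst (mt g h) i < fst (mt g h) j" unfolding fst_mt min_def by auto
  qed
qed

lemma QQ_ext:
  assumes "QQ v C Cp m n \<alpha> \<theta> Ya g" "QQ v C Cp m n \<alpha> \<theta> Ya h" "\<forall>i\<le>m. fst g i = fst h i"
  shows "g = h"
proof -
  note G = QQ_unf[OF assms(1)] and H = QQ_unf[OF assms(2)]
  have 1: "fst g = fst h"
  proof
    fix i show "fst g i = fst h i"
    proof (cases "i \<le> m")
      case True then show ?thesis using assms(3) by simp
    next
      case False then show ?thesis using G(4) H(4) by simp
    qed
  qed
  have 2: "snd g = snd h"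
  proof
    fix i show "snd g i = snd h i"
    proof (cases "i \<le> m")
      case True then show ?thesis using G(3) H(3) 1 by simp
    next
      case False then show ?thesis using G(4) H(4) by simp
    qed
  qed
  show ?thesis using 1 2 by (simp add: prod_eq_iff)
qed

lemma QQ_le:
  assumes cat: "category C" and Y: "nat_functor C (n,Yo,Ya)"
    and th: "\<forall>i\<le>m. \<theta> i \<in> hom C (Xo i) (Yo (\<alpha> i))"
    and "QQ v C Cp m n \<alpha> \<theta> Ya g" "QQ v C Cp m n \<alpha> \<theta> Ya h"
  shows "nmor_le C (m,Xo,Xa) (n,Yo,Ya) g h \<longleftrightarrow> (\<forall>i\<le>m. fst g i \<le> fst h i)"
proof -
  obtain b1 p1 b2 p2 where g: "g = (b1,p1)" and h: "h = (b2,p2)" by fastforce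
  have A: "\<forall>i\<le>m. \<alpha> i \<le> b1 i \<and> b1 i \<le> n" "\<forall>i\<le>m. p1 i = Comp C (Ya (\<alpha> i) (b1 i)) (\<theta> i)"
    "\<forall>i\<le>m. \<alpha> i \<le> b2 i \<and> b2 i \<le> n" "\<forall>i\<le>m. p2 i = Comp C (Ya (\<alpha> i) (b2 i)) (\<theta> i)"
    using assms(4,5) unfolding g h QQ_def by auto
  have "p2 i = Comp C (Ya (b1 i) (b2 i)) (p1 i)" if "i \<le> m" "b1 i \<le> b2 i" for i
    using Ycomp[OF cat Y, of "\<alpha> i" "b1 i" "b2 i" "\<theta> i"] A th that unfolding hom_iff by auto
  then show ?thesis unfolding g h nmor_le_def by auto
qed

theorem corollary4p5:
  fixes C :: "('o, 'm) cat" and Cm Cp :: "'m set" and v :: variant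
    and x y :: "('o, 'm) nobj" and f :: "'m nmor"
  assumes "reedy C Cm Cp"
    and "gobj v C Cm Cp x" and "gobj v C Cm Cp y"
    and "f \<in> ghom v C Cm Cp x y"
  shows "bounded_distrib_lattice_on
           {g \<in> ghom v C Cm Cp x y. nmor_le C x y f g} (nmor_le C x y)"
proof -
  obtain m Xo Xa where x: "x = (m,Xo,Xa)" by (cases x) auto
  obtain n Yo Ya where y: "y = (n,Yo,Ya)" by (cases y) auto
  obtain \<alpha> \<theta> where fd: "f = (\<alpha>,\<theta>)" by fastforce
  have cat: "category C" using assms(1) unfolding reedy_def by auto
  have X: "nat_functor C (m,Xo,Xa)" using assms(2) unfolding x gobj_def by auto
  have Y: "nat_functor C (n,Yo,Ya)" using assms(3) unfolding y gobj_def by auto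
  have fg: "(\<alpha>,\<theta>) \<in> ghom v C Cm Cp (m,Xo,Xa) (n,Yo,Ya)" using assms(4) x y fd by simp
  have th: "\<forall>i\<le>m. \<theta> i \<in> hom C (Xo i) (Yo (\<alpha> i))" and al: "\<forall>i\<le>m. \<alpha> i \<le> n"
    using fg unfolding ghom_def nmor_full_def by auto
  define Q where "Q = QQ v C Cp m n \<alpha> \<theta> Ya"
  have S: "{g \<in> ghom v C Cm Cp x y. nmor_le C x y f g} = {g. Q g}"
    using char[OF cat Y X fg] unfolding x y fd Q_def by auto
  have le: "Q g \<Longrightarrow> Q h \<Longrightarrow> nmor_le C x y g h \<longleftrightarrow> (\<forall>i\<le>m. fst g i \<le> fst h i)" for g h
    using QQ_le[OF cat Y th] unfolding x y Q_def by auto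
  have ext: "Q g \<Longrightarrow> Q h \<Longrightarrow> \<forall>i\<le>m. fst g i = fst h i \<Longrightarrow> g = h" for g h
    using QQ_ext unfolding Q_def by blast
  have Qj: "Q g \<Longrightarrow> Q h \<Longrightarrow> Q (jn g h)" for g h using QQ_jn unfolding Q_def by blast
  have Qm: "Q g \<Longrightarrow> Q h \<Longrightarrow> Q (mt g h)" for g h using QQ_mt unfolding Q_def by blast
  have self: "nmor_le C x y f f"
  proof -
    have "\<theta> i = Comp C (Ya (\<alpha> i) (\<alpha> i)) (\<theta> i)" if "i \<le> m" for i
    proof -
      have "Ya (\<alpha> i) (\<alpha> i) = Idm C (Yo (\<alpha> i))" using Y al that unfolding nat_functor_def by auto
      moreover have "\<theta> i \<in> Ar C" "Cod C (\<theta> i) = Yo (\<alpha> i)" using th that unfolding hom_iff by auto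
      ultimately show ?thesis using cat_idl[OF cat, of "\<theta> i"] by simp
    qed
    then show ?thesis unfolding x y fd nmor_le_def by auto
  qed
  have Qf: "Q f" using S assms(4) self by auto
  have Qfle: "Q g \<Longrightarrow> \<forall>i\<le>m. fst f i \<le> fst g i" for g unfolding Q_def QQ_def fd by auto
  have top: "\<exists>t. Q t \<and> (\<forall>g. Q g \<longrightarrow> (\<forall>i\<le>m. fst g i \<le> fst t i))"
  proof -
    define Tb where "Tb i = Max {fst g i | g. Q g}" for i
    have fin: "finite {fst g i | g. Q g}" if "i \<le> m" for i
    proof (rule finite_subset)
      show "{fst g i | g. Q g} \<subseteq> {..n}" using that unfolding Q_def QQ_def by fastforce
    qed simp
    have ne: "{fst g i | g. Q g} \<noteq> {}" for i using Qf by blast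
    have ge: "Q g \<Longrightarrow> i \<le> m \<Longrightarrow> fst g i \<le> Tb i" for g i
      unfolding Tb_def by (rule Max_ge[OF fin]) blast+
    obtain G where G: "\<And>i. i \<le> m \<Longrightarrow> Q (G i) \<and> fst (G i) i = Tb i"
    proof -
      have "\<forall>i. \<exists>g. i \<le> m \<longrightarrow> Q g \<and> fst g i = Tb i"
      proof
        fix i show "\<exists>g. i \<le> m \<longrightarrow> Q g \<and> fst g i = Tb i"
        proof (cases "i \<le> m")
          case True
          have "Tb i \<in> {fst g i | g. Q g}" unfolding Tb_def using Max_in[OF fin[OF True] ne] .
          then show ?thesis by auto
        qed auto
      qed
      then show ?thesis using that by metis
    qed
    have GQ: "i \<le> m \<Longrightarrow> (\<forall>k\<le>m. \<alpha> k \<le> fst (G i) k \<and> fst (G i) k \<le> n) \<and>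
       (\<forall>k j. k \<le> j \<and> j \<le> m \<longrightarrow> fst (G i) k \<le> fst (G i) j) \<and>
       (\<forall>k\<le>m. snd (G i) k = Comp C (Ya (\<alpha> k) (fst (G i) k)) (\<theta> k)) \<and>
       (v \<noteq> Full \<longrightarrow> (\<forall>k\<le>m. snd (G i) k \<in> Cp)) \<and>
       (v = MinusMinusPlusPlus \<longrightarrow> (\<forall>k j. k < j \<and> j \<le> m \<longrightarrow> fst (G i) k < fst (G i) j))" for i
      using G[of i] inj_mono_iff[of m "fst (G i)"] unfolding Q_def QQ_def by (auto split: prod.splits)
    define t where "t = (\<lambda>i. if i \<le> m then Tb i else undefined,
       \<lambda>i. if i \<le> m then Comp C (Ya (\<alpha> i) (Tb i)) (\<theta> i) else undefined)"
    have mono: "\<forall>i j. i \<le> j \<and> j \<le> m \<longrightarrow> fst t i \<le> fst t j"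
    proof (intro allI impI)
      fix i j assume ij: "i \<le> j \<and> j \<le> m"
      have "fst t i = fst (G i) i" using G ij unfolding t_def by auto
      also have "\<dots> \<le> fst (G i) j" using GQ[of i] ij by auto
      also have "\<dots> \<le> fst t j" using ge G ij unfolding t_def by auto
      finally show "fst t i \<le> fst t j" .
    qed
    have strict: "v = MinusMinusPlusPlus \<longrightarrow> (\<forall>i j. i < j \<and> j \<le> m \<longrightarrow> fst t i < fst t j)"
    proof (intro allI impI)
      fix i j assume vv: "v = MinusMinusPlusPlus" and ij: "i < j \<and> j \<le> m"
      have "fst t i = fst (G i) i" using G ij unfolding t_def by auto
      also have "\<dots> < fst (G i) j" using GQ[of i] ij vv by auto
      also have "\<dots> \<le> fst t j" using ge G ij unfolding t_def by auto
      finally show "fst t i < fst t j" .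
    qed
    have "Q t"
    proof -
      have a1: "\<forall>i\<le>m. \<alpha> i \<le> fst t i \<and> fst t i \<le> n" using G GQ unfolding t_def by fastforce
      have a2: "v \<noteq> Full \<longrightarrow> (\<forall>i\<le>m. snd t i \<in> Cp)" using G GQ unfolding t_def by fastforce
      show ?thesis unfolding Q_def QQ_def
        using a1 a2 mono strict inj_mono_iff[OF mono] unfolding t_def by auto
    qed
    moreover have "\<forall>g. Q g \<longrightarrow> (\<forall>i\<le>m. fst g i \<le> fst t i)" using ge unfolding t_def by auto
    ultimately show ?thesis by blast
  qed
  show ?thesis unfolding S bounded_distrib_lattice_on_def
  proof (intro conjI)
    show "\<forall>a\<in>{g. Q g}. nmor_le C x y a a" using le by auto
    show "\<forall>a\<in>{g. Q g}. \<forall>b\<in>{g. Q g}. nmor_le C x y a b \<and> nmor_le C x y b a \<longrightarrow> a = b"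
    proof (intro ballI impI)
      fix a b assume a: "a \<in> {g. Q g}" and b: "b \<in> {g. Q g}"
        and h: "nmor_le C x y a b \<and> nmor_le C x y b a"
      have "\<forall>i\<le>m. fst a i = fst b i" using h le[of a b] le[of b a] a b by (simp add: order_antisym)
      then show "a = b" using ext a b by blast
    qed
    show "\<forall>a\<in>{g. Q g}. \<forall>b\<in>{g. Q g}. \<forall>c\<in>{g. Q g}. nmor_le C x y a b \<and> nmor_le C x y b c \<longrightarrow> nmor_le C x y a c"
      using le by (auto intro: le_trans)
    show "\<exists>t\<in>{g. Q g}. \<forall>a\<in>{g. Q g}. nmor_le C x y a t"
    proof -
      obtain t where t: "Q t" "\<And>g. Q g \<Longrightarrow> \<forall>i\<le>m. fst g i \<le> fst t i" using top by blast
      have "\<forall>a\<in>{g. Q g}. nmor_le C x y a t"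
      proof
        fix a assume "a \<in> {g. Q g}"
        then show "nmor_le C x y a t" using le[of a t] t by blast
      qed
      then show ?thesis using t(1) by blast
    qed
    show "\<exists>z\<in>{g. Q g}. \<forall>a\<in>{g. Q g}. nmor_le C x y z a"
    proof -
      have "\<forall>a\<in>{g. Q g}. nmor_le C x y f a"
      proof
        fix a assume "a \<in> {g. Q g}"
        then show "nmor_le C x y f a" using le[of f a] Qf Qfle by blast
      qed
      then show ?thesis using Qf by blast
    qed
    show "\<exists>join meet.
        (\<forall>a\<in>{g. Q g}. \<forall>b\<in>{g. Q g}. is_lub {g. Q g} (nmor_le C x y) a b (join a b) \<and> is_glb {g. Q g} (nmor_le C x y) a b (meet a b)) \<and>
        (\<forall>a\<in>{g. Q g}. \<forall>b\<in>{g. Q g}. \<forall>c\<in>{g. Q g}. meet a (join b c) = join (meet a b) (meet a c))"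
    proof (intro exI conjI ballI)
      fix a b assume a: "a \<in> {g. Q g}" and b: "b \<in> {g. Q g}"
      have qa: "Q a" and qb: "Q b" using a b by auto
      have qj: "Q (jn a b)" and qm: "Q (mt a b)" using Qj[OF qa qb] Qm[OF qa qb] .
      show "is_lub {g. Q g} (nmor_le C x y) a b (jn a b)"
        unfolding is_lub_def
      proof (intro conjI ballI impI)
        show "jn a b \<in> {g. Q g}" using qj by simp
        show "nmor_le C x y a (jn a b)" using le[OF qa qj] by (simp add: fst_jn)
        show "nmor_le C x y b (jn a b)" using le[OF qb qj] by (simp add: fst_jn)
        fix u assume u: "u \<in> {g. Q g}" and h: "nmor_le C x y a u \<and> nmor_le C x y b u"
        then have qu: "Q u" by simp
        show "nmor_le C x y (jn a b) u" using h le[OF qa qu] le[OF qb qu] le[OF qj qu]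
          by (simp add: fst_jn)
      qed
      show "is_glb {g. Q g} (nmor_le C x y) a b (mt a b)"
        unfolding is_glb_def
      proof (intro conjI ballI impI)
        show "mt a b \<in> {g. Q g}" using qm by simp
        show "nmor_le C x y (mt a b) a" using le[OF qm qa] by (simp add: fst_mt)
        show "nmor_le C x y (mt a b) b" using le[OF qm qb] by (simp add: fst_mt)
        fix u assume u: "u \<in> {g. Q g}" and h: "nmor_le C x y u a \<and> nmor_le C x y u b"
        then have qu: "Q u" by simp
        show "nmor_le C x y u (mt a b)" using h le[OF qu qa] le[OF qu qb] le[OF qu qm]
          by (simp add: fst_mt)
      qed
    next
      fix a b c assume a: "a \<in> {g. Q g}" and b: "b \<in> {g. Q g}" and c: "c \<in> {g. Q g}"
      have qa: "Q a" and qb: "Q b" and qc: "Q c" using a b c by auto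
      show "mt a (jn b c) = jn (mt a b) (mt a c)"
        by (rule ext[OF Qm[OF qa Qj[OF qb qc]] Qj[OF Qm[OF qa qb] Qm[OF qa qc]]])
           (simp add: fst_jn fst_mt min_max_distrib2)
    qed
  qed
qed

end
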